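(* Let $A$ be a two-dimensional evolution algebra over a field $\mathbb{K}$. (i) If $A^2=A$ and for every natural basis $\{e_1,e_2\}$ of $A$, writing $e_1^2=\omega_{11}e_1+\omega_{21}e_2$ and $e_2^2=\omega_{12}e_1+\omega_{22}e_2$, one has $\omega_{12}\neq0$ and $\omega_{21}\neq0$, then $A$ is simple. (ii) If $A$ is simple, then for every natural basis $\{e_1,e_2\}$ of $A$ (with the same notation) one has $\omega_{12}\neq0$ and $\omega_{21}\neq0$.
   Context: An evolution algebra over $\mathbb{K}$ is a $\mathbb{K}$-algebra $A$ with a basis $\{e_i\}$ (a natural basis) such that $e_ie_j=0$ for $i\neq j$. In the paper's language, $\omega_{12}\neq0$ and $\omega_{21}\neq0$ means that the top and bottom edges appear in the pseudo-square relative to that basis. $A$ is simple if $A^2\neq0$ and its only ideals are $0$ and $A$. *)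

theory Defs
  imports Main
begin

text \<open>A two-dimensional vector space over a field 'k is modelled (up to isomorphism)
  as 'k \<times> 'k with componentwise operations; an algebra structure is a bilinear map.\<close>

definition vadd :: "'k::field \<times> 'k \<Rightarrow> 'k \<times> 'k \<Rightarrow> 'k \<times> 'k" where
  "vadd x y = (fst x + fst y, snd x + snd y)"

definition smul :: "'k::field \<Rightarrow> 'k \<times> 'k \<Rightarrow> 'k \<times> 'k" where
  "smul c x = (c * fst x, c * snd x)"

definition vzero :: "'k::field \<times> 'k" where
  "vzero = (0, 0)"

definition bilinear_mul :: "('k::field \<times> 'k \<Rightarrow> 'k \<times> 'k \<Rightarrow> 'k \<times> 'k) \<Rightarrow> bool" where
  "bilinear_mul m \<longleftrightarrow>
     (\<forall>x y z. m (vadd x y) z = vadd (m x z) (m y z)) \<and>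
     (\<forall>x y z. m x (vadd y z) = vadd (m x y) (m x z)) \<and>
     (\<forall>c x y. m (smul c x) y = smul c (m x y)) \<and>
     (\<forall>c x y. m x (smul c y) = smul c (m x y))"

definition subspace2 :: "('k::field \<times> 'k) set \<Rightarrow> bool" where
  "subspace2 S \<longleftrightarrow> vzero \<in> S \<and> (\<forall>x\<in>S. \<forall>y\<in>S. vadd x y \<in> S) \<and> (\<forall>c. \<forall>x\<in>S. smul c x \<in> S)"

text \<open>In dimension 2, a basis is a linearly independent ordered pair.\<close>
definition lin_indep2 :: "'k::field \<times> 'k \<Rightarrow> 'k \<times> 'k \<Rightarrow> bool" where
  "lin_indep2 e1 e2 \<longleftrightarrow> (\<forall>a b. vadd (smul a e1) (smul b e2) = vzero \<longrightarrow> a = 0 \<and> b = 0)"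

definition natural_basis :: "('k::field \<times> 'k \<Rightarrow> 'k \<times> 'k \<Rightarrow> 'k \<times> 'k) \<Rightarrow> 'k \<times> 'k \<Rightarrow> 'k \<times> 'k \<Rightarrow> bool" where
  "natural_basis m e1 e2 \<longleftrightarrow> lin_indep2 e1 e2 \<and> m e1 e2 = vzero \<and> m e2 e1 = vzero"

definition evolution_algebra2 :: "('k::field \<times> 'k \<Rightarrow> 'k \<times> 'k \<Rightarrow> 'k \<times> 'k) \<Rightarrow> bool" where
  "evolution_algebra2 m \<longleftrightarrow> bilinear_mul m \<and> (\<exists>e1 e2. natural_basis m e1 e2)"

definition alg_square :: "('k::field \<times> 'k \<Rightarrow> 'k \<times> 'k \<Rightarrow> 'k \<times> 'k) \<Rightarrow> ('k \<times> 'k) set" where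
  "alg_square m = \<Inter>{S. subspace2 S \<and> (\<forall>x y. m x y \<in> S)}"

definition alg_ideal :: "('k::field \<times> 'k \<Rightarrow> 'k \<times> 'k \<Rightarrow> 'k \<times> 'k) \<Rightarrow> ('k \<times> 'k) set \<Rightarrow> bool" where
  "alg_ideal m I \<longleftrightarrow> subspace2 I \<and> (\<forall>x\<in>I. \<forall>y. m x y \<in> I \<and> m y x \<in> I)"

definition simple_alg :: "('k::field \<times> 'k \<Rightarrow> 'k \<times> 'k \<Rightarrow> 'k \<times> 'k) \<Rightarrow> bool" where
  "simple_alg m \<longleftrightarrow> alg_square m \<noteq> {vzero} \<and> (\<forall>I. alg_ideal m I \<longrightarrow> I = {vzero} \<or> I = UNIV)"

end

theory Submission
  imports Defs
begin

definition det2 :: "'k::field \<times> 'k \<Rightarrow> 'k \<times> 'k \<Rightarrow> 'k" where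
  "det2 x y = fst x * snd y - snd x * fst y"

lemma li_iff: "lin_indep2 x y \<longleftrightarrow> det2 x y \<noteq> 0"
proof
  assume li: "lin_indep2 x y"
  show "det2 x y \<noteq> 0"
  proof
    assume d: "det2 x y = 0"
    show False
    proof (cases "y = vzero")
      case True
      have "vadd (smul 0 x) (smul 1 y) = vzero" using True by (simp add: vadd_def smul_def vzero_def)
      then show False using li unfolding lin_indep2_def by fastforce
    next
      case False
      have "vadd (smul (snd y) x) (smul (- snd x) y) = vzero"
           "vadd (smul (fst y) x) (smul (- fst x) y) = vzero"
        using d by (auto simp: vadd_def smul_def vzero_def det2_def algebra_simps)
      then have "snd y = 0 \<and> fst y = 0" using li unfolding lin_indep2_def by blast
      then show False using False by (simp add: vzero_def prod_eq_iff)
    qed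
  qed
next
  assume d: "det2 x y \<noteq> 0"
  show "lin_indep2 x y" unfolding lin_indep2_def
  proof (intro allI impI)
    fix a b assume h: "vadd (smul a x) (smul b y) = vzero"
    then have h1: "a * fst x + b * fst y = 0" and h2: "a * snd x + b * snd y = 0"
      by (auto simp: vadd_def smul_def vzero_def)
    have "a * det2 x y = snd y * (a * fst x + b * fst y) - fst y * (a * snd x + b * snd y)"
      by (simp add: det2_def algebra_simps)
    then have "a * det2 x y = 0" using h1 h2 by simp
    moreover have "b * det2 x y = fst x * (a * snd x + b * snd y) - snd x * (a * fst x + b * fst y)"
      by (simp add: det2_def algebra_simps)
    then have "b * det2 x y = 0" using h1 h2 by simp
    ultimately show "a = 0 \<and> b = 0" using d by simp
  qed
qed

lemma decomp:
  assumes "det2 e1 e2 \<noteq> 0"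
  shows "\<exists>a b. x = vadd (smul a e1) (smul b e2)"
proof -
  let ?d = "det2 e1 e2"
  have h1: "((fst x * snd e2 - snd x * fst e2) / ?d) * fst e1 + ((fst e1 * snd x - snd e1 * fst x) / ?d) * fst e2
     = (fst x * ?d) / ?d"
    by (simp add: add_divide_distrib[symmetric] det2_def algebra_simps)
  have h2: "((fst x * snd e2 - snd x * fst e2) / ?d) * snd e1 + ((fst e1 * snd x - snd e1 * fst x) / ?d) * snd e2
     = (snd x * ?d) / ?d"
    by (simp add: add_divide_distrib[symmetric] det2_def algebra_simps)
  have "x = vadd (smul ((fst x * snd e2 - snd x * fst e2) / ?d) e1)
                 (smul ((fst e1 * snd x - snd e1 * fst x) / ?d) e2)"
    using assms h1 h2 by (simp add: prod_eq_iff vadd_def smul_def)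
  then show ?thesis by blast
qed

lemma span_all:
  assumes "subspace2 I" "x \<in> I" "y \<in> I" "det2 x y \<noteq> 0"
  shows "I = UNIV"
proof -
  { fix z
    obtain a b where "z = vadd (smul a x) (smul b y)" using decomp[OF assms(4)] by blast
    then have "z \<in> I" using assms(1-3) unfolding subspace2_def by auto }
  then show ?thesis by auto
qed

lemma bl:
  assumes "bilinear_mul m"
  shows "m (vadd x y) z = vadd (m x z) (m y z)" "m x (vadd y z) = vadd (m x y) (m x z)"
        "m (smul c x) y = smul c (m x y)" "m x (smul c y) = smul c (m x y)"
  using assms unfolding bilinear_mul_def by blast+

lemma vsimps: "smul c vzero = vzero" "vadd vzero x = x" "vadd x vzero = x"
  by (auto simp: smul_def vadd_def vzero_def)

lemma mul_lin:
  assumes "bilinear_mul m" "natural_basis m e1 e2"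
  shows "m (vadd (smul a1 e1) (smul b1 e2)) (vadd (smul a2 e1) (smul b2 e2))
         = vadd (smul (a1*a2) (m e1 e1)) (smul (b1*b2) (m e2 e2))"
  using assms(2) unfolding natural_basis_def
  by (simp add: bl[OF assms(1)] vsimps) (simp add: smul_def vadd_def algebra_simps)

lemma mul_e1:
  assumes "bilinear_mul m" "natural_basis m e1 e2"
  shows "m (vadd (smul a e1) (smul b e2)) e1 = smul a (m e1 e1)"
        "m (vadd (smul a e1) (smul b e2)) e2 = smul b (m e2 e2)"
  using assms(2) unfolding natural_basis_def
  by (simp_all add: bl[OF assms(1)] vsimps)

lemma nb_sym: "natural_basis m e1 e2 \<Longrightarrow> natural_basis m e2 e1"
  unfolding natural_basis_def li_iff det2_def by (auto simp: algebra_simps)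

lemma line_ideal:
  assumes bm: "bilinear_mul m" and nb: "natural_basis m e1 e2" and sq: "m e2 e2 = smul w e2"
  shows "\<not> simple_alg m"
proof
  assume s: "simple_alg m"
  have d: "det2 e1 e2 \<noteq> 0" using nb unfolding natural_basis_def li_iff by simp
  have z1: "m e1 e2 = vzero" "m e2 e1 = vzero" using nb unfolding natural_basis_def by auto
  define I where "I = range (\<lambda>c. smul c e2)"
  have sub: "subspace2 I"
    unfolding subspace2_def I_def
  proof (intro conjI ballI allI)
    show "vzero \<in> range (\<lambda>c. smul c e2)"
      by (rule range_eqI[of _ _ 0]) (simp add: smul_def vzero_def)
  next
    fix x y assume "x \<in> range (\<lambda>c. smul c e2)" "y \<in> range (\<lambda>c. smul c e2)"
    then obtain a b where "x = smul a e2" "y = smul b e2" by auto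
    then show "vadd x y \<in> range (\<lambda>c. smul c e2)"
      by (intro range_eqI[of _ _ "a+b"]) (simp add: smul_def vadd_def algebra_simps)
  next
    fix c x assume "x \<in> range (\<lambda>c. smul c e2)"
    then obtain a where "x = smul a e2" by auto
    then show "smul c x \<in> range (\<lambda>c. smul c e2)"
      by (intro range_eqI[of _ _ "c*a"]) (simp add: smul_def algebra_simps)
  qed
  have "alg_ideal m I"
    unfolding alg_ideal_def
  proof (intro conjI ballI allI sub)
    fix x y assume "x \<in> I"
    then obtain c where x: "x = smul c e2" unfolding I_def by auto
    obtain a b where y: "y = vadd (smul a e1) (smul b e2)" using decomp[OF d] by blast
    have "m x y = smul (c*b*w) e2"
      unfolding x y by (simp add: bl[OF bm] z1 sq vsimps) (simp add: smul_def vadd_def algebra_simps)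
    then show "m x y \<in> I" unfolding I_def by auto
    have "m y x = smul (c*b*w) e2"
      unfolding x y by (simp add: bl[OF bm] z1 sq vsimps) (simp add: smul_def vadd_def algebra_simps)
    then show "m y x \<in> I" unfolding I_def by auto
  qed
  then have "I = {vzero} \<or> I = UNIV" using s unfolding simple_alg_def by auto
  moreover have "e2 \<in> I" unfolding I_def by (rule range_eqI[of _ _ 1]) (simp add: smul_def)
  moreover have "e2 \<noteq> vzero" using d by (auto simp: det2_def vzero_def)
  moreover have "e1 \<notin> I"
  proof
    assume "e1 \<in> I"
    then obtain c where "e1 = smul c e2" unfolding I_def by auto
    then have "det2 e1 e2 = 0" by (simp add: det2_def smul_def algebra_simps)
    then show False using d by simp
  qed
  ultimately show False by auto
qed

theorem proposition2p3:
  fixes m :: "'k::field \<times> 'k \<Rightarrow> 'k \<times> 'k \<Rightarrow> 'k \<times> 'k"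
  assumes "evolution_algebra2 m"
  shows "(alg_square m = UNIV \<and>
          (\<forall>e1 e2 w11 w21 w12 w22. natural_basis m e1 e2 \<and>
              m e1 e1 = vadd (smul w11 e1) (smul w21 e2) \<and>
              m e2 e2 = vadd (smul w12 e1) (smul w22 e2) \<longrightarrow> w12 \<noteq> 0 \<and> w21 \<noteq> 0)
          \<longrightarrow> simple_alg m)
       \<and> (simple_alg m \<longrightarrow>
          (\<forall>e1 e2 w11 w21 w12 w22. natural_basis m e1 e2 \<and>
              m e1 e1 = vadd (smul w11 e1) (smul w21 e2) \<and>
              m e2 e2 = vadd (smul w12 e1) (smul w22 e2) \<longrightarrow> w12 \<noteq> 0 \<and> w21 \<noteq> 0))"
proof (rule conjI; intro impI allI)
  have bm: "bilinear_mul m" using assms unfolding evolution_algebra2_def by auto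
  {
    assume s: "simple_alg m"
    fix e1 e2 w11 w21 w12 w22
    assume h: "natural_basis m e1 e2 \<and>
              m e1 e1 = vadd (smul w11 e1) (smul w21 e2) \<and>
              m e2 e2 = vadd (smul w12 e1) (smul w22 e2)"
    show "w12 \<noteq> 0 \<and> w21 \<noteq> 0"
    proof
      show "w12 \<noteq> 0"
      proof
        assume "w12 = 0"
        then have "m e2 e2 = smul w22 e2" using h by (simp add: vadd_def smul_def)
        then show False using line_ideal[OF bm] h s by blast
      qed
      show "w21 \<noteq> 0"
      proof
        assume "w21 = 0"
        then have "m e1 e1 = smul w11 e1" using h by (simp add: vadd_def smul_def)
        then show False using line_ideal[OF bm nb_sym] h s by blast
      qed
    qed
  }
  assume H: "alg_square m = UNIV \<and>
          (\<forall>e1 e2 w11 w21 w12 w22. natural_basis m e1 e2 \<and>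
              m e1 e1 = vadd (smul w11 e1) (smul w21 e2) \<and>
              m e2 e2 = vadd (smul w12 e1) (smul w22 e2) \<longrightarrow> w12 \<noteq> 0 \<and> w21 \<noteq> 0)"
  obtain e1 e2 where nb: "natural_basis m e1 e2" using assms unfolding evolution_algebra2_def by auto
  have d: "det2 e1 e2 \<noteq> 0" using nb unfolding natural_basis_def li_iff by simp
  define u where "u = m e1 e1"
  define v where "v = m e2 e2"
  obtain w11 w21 where u: "u = vadd (smul w11 e1) (smul w21 e2)" using decomp[OF d] by blast
  obtain w12 w22 where v: "v = vadd (smul w12 e1) (smul w22 e2)" using decomp[OF d] by blast
  have w: "w12 \<noteq> 0" "w21 \<noteq> 0" using H nb u v unfolding u_def v_def by blast+
  have duv: "det2 u v \<noteq> 0"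
  proof
    assume dz: "det2 u v = 0"
    have "\<exists>\<alpha> \<beta>. (\<alpha> \<noteq> 0 \<or> \<beta> \<noteq> 0) \<and> \<alpha> * fst u + \<beta> * snd u = 0 \<and> \<alpha> * fst v + \<beta> * snd v = 0"
    proof (cases "u = vzero")
      case False
      then show ?thesis using dz
        by (intro exI[of _ "snd u"] exI[of _ "- fst u"])
           (auto simp: vzero_def prod_eq_iff det2_def algebra_simps)
    next
      case uz: True
      show ?thesis
      proof (cases "v = vzero")
        case False
        then show ?thesis using uz
          by (intro exI[of _ "snd v"] exI[of _ "- fst v"])
             (auto simp: vzero_def prod_eq_iff algebra_simps)
      next
        case True
        then show ?thesis using uz
          by (intro exI[of _ 1] exI[of _ 0]) (auto simp: vzero_def)
      qed
    qed
    then obtain \<alpha> \<beta> where ab: "\<alpha> \<noteq> 0 \<or> \<beta> \<noteq> 0" "\<alpha> * fst u + \<beta> * snd u = 0" "\<alpha> * fst v + \<beta> * snd v = 0"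
      by blast
    define T where "T = {z. \<alpha> * fst z + \<beta> * snd z = 0}"
    have "subspace2 T" unfolding subspace2_def T_def
      by (auto simp: vzero_def vadd_def smul_def algebra_simps)
         (metis mult_zero_right distrib_left mult.left_commute)
    moreover have "\<forall>x y. m x y \<in> T"
    proof (intro allI)
      fix x y
      obtain a1 b1 where x: "x = vadd (smul a1 e1) (smul b1 e2)" using decomp[OF d] by blast
      obtain a2 b2 where y: "y = vadd (smul a2 e1) (smul b2 e2)" using decomp[OF d] by blast
      have "m x y = vadd (smul (a1*a2) u) (smul (b1*b2) v)"
        unfolding x y u_def v_def by (rule mul_lin[OF bm nb])
      moreover have "\<alpha> * (a1*a2*fst u + b1*b2*fst v) + \<beta> * (a1*a2*snd u + b1*b2*snd v)
          = a1*a2*(\<alpha> * fst u + \<beta> * snd u) + b1*b2*(\<alpha> * fst v + \<beta> * snd v)"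
        by (simp add: algebra_simps)
      ultimately show "m x y \<in> T" unfolding T_def using ab
        by (simp add: vadd_def smul_def)
    qed
    ultimately have "alg_square m \<subseteq> T" unfolding alg_square_def by blast
    then have "(1,0) \<in> T" "(0,1) \<in> T" using H by auto
    then show False using ab(1) unfolding T_def by auto
  qed
  show "simple_alg m" unfolding simple_alg_def
  proof (intro conjI allI impI)
    have "(1::'k, 0::'k) \<noteq> vzero" by (simp add: vzero_def)
    then show "alg_square m \<noteq> {vzero}" using H by (metis UNIV_I singletonD)
  next
    fix I assume I: "alg_ideal m I"
    have sub: "subspace2 I" using I unfolding alg_ideal_def by auto
    have z: "vzero \<in> I" using sub unfolding subspace2_def by auto
    show "I = {vzero} \<or> I = UNIV"
    proof (cases "I = {vzero}")
      case True then show ?thesis by simp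
    next
      case False
      then obtain v0 where v0: "v0 \<in> I" "v0 \<noteq> vzero" using z by auto
      obtain a b where ab: "v0 = vadd (smul a e1) (smul b e2)" using decomp[OF d] by blast
      have i1: "smul a u \<in> I" using I v0(1) mul_e1(1)[OF bm nb, of a b] unfolding alg_ideal_def ab u_def
        by metis
      have i2: "smul b v \<in> I" using I v0(1) mul_e1(2)[OF bm nb, of a b] unfolding alg_ideal_def ab v_def
        by metis
      have "I = UNIV"
      proof (cases "a = 0")
        case True
        then have b: "b \<noteq> 0" using v0(2) ab by (auto simp: vadd_def smul_def vzero_def)
        have "det2 v0 (smul b v) = - (b*b*w12*det2 e1 e2)"
          unfolding ab v True by (simp add: det2_def vadd_def smul_def algebra_simps)
        then have "det2 v0 (smul b v) \<noteq> 0" using b w d by simp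
        then show ?thesis using span_all[OF sub v0(1) i2] by simp
      next
        case a: False
        show ?thesis
        proof (cases "b = 0")
          case True
          have "det2 v0 (smul a u) = a*a*w21*det2 e1 e2"
            unfolding ab u True by (simp add: det2_def vadd_def smul_def algebra_simps)
          then have "det2 v0 (smul a u) \<noteq> 0" using a w d by simp
          then show ?thesis using span_all[OF sub v0(1) i1] by simp
        next
          case False
          have "det2 (smul a u) (smul b v) = a*b*det2 u v"
            by (simp add: det2_def smul_def algebra_simps)
          then have "det2 (smul a u) (smul b v) \<noteq> 0" using a False duv by simp
          then show ?thesis using span_all[OF sub i1 i2] by simp
        qed
      qed
      then show ?thesis by simp
    qed
  qed
qed

end
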